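(* For any $m$ and $n$ with $M^2k\le m\le n$ and $0.3\log n\le k$, the probability that $G_{m,k}$ contains an edge of length at least $\frac18M\sqrt k$ is $o(e^{-9k})$ as $k\to\infty$ (uniformly in such $m,n$).
   Context: For $m>0$ let $S_m$ be a square of area $m$, $\mathcal P$ a Poisson process of intensity one in $S_m$, and $G_{m,k}$ the undirected graph on $\mathcal P$ in which $x,y$ are adjacent if $y$ is one of the $k$ nearest neighbours of $x$ or vice versa. $M$ is a fixed real constant with $M\ge 40$ such that, whenever $0.30\log n<k<0.52\log n$, the probability that $G_{n,k}$ contains two components each of Euclidean diameter greater than $\frac18 M\sqrt{k}$ is $o(e^{-9k})$ as $k\to\infty$. *)

theory Defs
  imports "HOL-Probability.Probability"
begin

type_synonym point = "real \<times> real"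

definition square :: "real \<Rightarrow> point set" where
  "square m = cbox (0, 0) (sqrt m, sqrt m)"

text \<open>Probability that a Poisson process of intensity one in S_m has property E.
  The process is realised in the standard way: the number N of points is Poisson(m)
  distributed, and given N the points are N independent uniform points in S_m.
  A configuration is the (finite) set of its points.\<close>
definition poisson_prob :: "real \<Rightarrow> (point set \<Rightarrow> bool) \<Rightarrow> real" where
  "poisson_prob m E =
     (\<Sum>N. (m ^ N / fact N * exp (- m)) *
        measure (PiM {..<N} (\<lambda>_. uniform_measure lborel (square m)))
          {\<omega> \<in> space (PiM {..<N} (\<lambda>_. uniform_measure lborel (square m))). E (\<omega> ` {..<N})})"

definition knn :: "nat \<Rightarrow> point set \<Rightarrow> point \<Rightarrow> point \<Rightarrow> bool" where
  "knn k P x y \<longleftrightarrow> x \<in> P \<and> y \<in> P \<and> y \<noteq> x \<and>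
     card {z \<in> P. z \<noteq> x \<and> dist x z < dist x y} < k"

definition knn_adj :: "nat \<Rightarrow> point set \<Rightarrow> point \<Rightarrow> point \<Rightarrow> bool" where
  "knn_adj k P x y \<longleftrightarrow> knn k P x y \<or> knn k P y x"

definition knn_component :: "nat \<Rightarrow> point set \<Rightarrow> point \<Rightarrow> point set" where
  "knn_component k P x = {y \<in> P. (x, y) \<in> {(a, b). knn_adj k P a b}\<^sup>*}"

definition two_big_components :: "nat \<Rightarrow> real \<Rightarrow> point set \<Rightarrow> bool" where
  "two_big_components k d P \<longleftrightarrow>
     (\<exists>x\<in>P. \<exists>y\<in>P. knn_component k P x \<noteq> knn_component k P y \<and>
        diameter (knn_component k P x) > d \<and> diameter (knn_component k P y) > d)"

definition long_edge :: "nat \<Rightarrow> real \<Rightarrow> point set \<Rightarrow> bool" where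
  "long_edge k d P \<longleftrightarrow> (\<exists>x y. knn_adj k P x y \<and> dist x y \<ge> d)"

end

theory Submission
  imports Defs
begin


definition lo :: "real \<Rightarrow> real \<Rightarrow> real \<Rightarrow> real \<Rightarrow> real" where
  "lo s u \<alpha> \<beta> = (if u \<le> s/2 then u + \<alpha> else u - \<beta>)"
definition hi :: "real \<Rightarrow> real \<Rightarrow> real \<Rightarrow> real \<Rightarrow> real" where
  "hi s u \<alpha> \<beta> = (if u \<le> s/2 then u + \<beta> else u - \<alpha>)"

lemma lohi:
  assumes "0 \<le> u" "u \<le> s" "0 \<le> \<alpha>" "\<alpha> \<le> \<beta>" "\<beta> \<le> s/2"
  shows "hi s u \<alpha> \<beta> - lo s u \<alpha> \<beta> = \<beta> - \<alpha>" "0 \<le> lo s u \<alpha> \<beta>" "hi s u \<alpha> \<beta> \<le> s"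
    "\<And>v. lo s u \<alpha> \<beta> < v \<Longrightarrow> v < hi s u \<alpha> \<beta> \<Longrightarrow> \<bar>v - u\<bar> < \<beta>"
  using assms by (auto simp: lo_def hi_def split: if_splits)

lemma lohi_disj:
  assumes "\<alpha> \<le> \<beta>" "\<beta> \<le> \<beta>'" "\<beta>' \<le> \<gamma>"
  shows "{lo s u \<alpha> \<beta><..<hi s u \<alpha> \<beta>} \<inter> {lo s u \<beta>' \<gamma><..<hi s u \<beta>' \<gamma>} = {}"
  using assms by (auto simp: lo_def hi_def)

lemma measure_Un_fm: "X \<in> fmeasurable M \<Longrightarrow> Y \<in> fmeasurable M \<Longrightarrow> X \<inter> Y = {} \<Longrightarrow> measure M (X \<union> Y) = measure M X + measure M Y"
  by (rule measure_Union) (auto dest: fmeasurableD fmeasurableD2)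

lemma box_meas: "a1 \<le> b1 \<Longrightarrow> a2 \<le> b2 \<Longrightarrow> measure lborel ({a1<..<b1::real} \<times> {a2<..<b2::real}) = (b1-a1)*(b2-a2)"
proof -
  assume "a1 \<le> b1" "a2 \<le> b2"
  have "{a1<..<b1} \<times> {a2<..<b2::real} = box (a1,a2) (b1,b2)"
    by (auto simp: box_def Basis_prod_def)
  then show ?thesis using \<open>a1 \<le> b1\<close> \<open>a2 \<le> b2\<close>
    by (simp, subst measure_lborel_box) (auto simp: Basis_prod_def)
qed

lemma box_fm: "{a1<..<b1::real} \<times> {a2<..<b2::real} \<in> fmeasurable lborel"
proof -
  have "{a1<..<b1} \<times> {a2<..<b2::real} = box (a1,a2) (b1,b2)"
    by (auto simp: box_def Basis_prod_def)
  then show ?thesis by simp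
qed

lemma geo:
  fixes s r a b :: real
  assumes r: "0 < r" "8*r \<le> s" and x: "0 \<le> a" "a \<le> s" "0 \<le> b" "b \<le> s"
  shows "0.6628 * r^2 \<le> measure lborel (ball (a,b) r \<inter> cbox (0,0) (s,s))"
proof -
  define B where "B w \<alpha> \<beta> = {lo s a 0 (w*r)<..<hi s a 0 (w*r)} \<times> {lo s b (\<alpha>*r) (\<beta>*r)<..<hi s b (\<alpha>*r) (\<beta>*r)}" for w \<alpha> \<beta> :: real
  have mB: "measure lborel (B w \<alpha> \<beta>) = (w*r) * ((\<beta>-\<alpha>)*r)" if "0 \<le> w" "w \<le> 1" "0 \<le> \<alpha>" "\<alpha> \<le> \<beta>" "\<beta> \<le> 1" for w \<alpha> \<beta>
  proof -
    have w: "0 \<le> w*r" "w*r \<le> s/2" proof -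
      have "w*r \<le> r" using that r by (intro mult_left_le_one_le) auto
      then show "w*r \<le> s/2" using r by linarith
      show "0 \<le> w*r" using that r by simp
    qed
    have h: "0 \<le> \<alpha>*r" "\<alpha>*r \<le> \<beta>*r" "\<beta>*r \<le> s/2" proof -
      have "\<beta>*r \<le> r" using that r by (intro mult_left_le_one_le) auto
      then show "\<beta>*r \<le> s/2" using r by linarith
      show "0 \<le> \<alpha>*r" "\<alpha>*r \<le> \<beta>*r" using that r by (auto intro: mult_right_mono)
    qed
    show ?thesis
    proof -
      have e1: "hi s a 0 (w*r) - lo s a 0 (w*r) = w*r" using lohi(1)[OF x(1,2) order.refl w(1) w(2)] by simp
      have e2: "hi s b (\<alpha>*r) (\<beta>*r) - lo s b (\<alpha>*r) (\<beta>*r) = (\<beta>-\<alpha>)*r" using lohi(1)[OF x(3,4) h] by (simp add: algebra_simps)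
      have e2': "hi s b (\<alpha>*r) (\<beta>*r) - lo s b (\<alpha>*r) (\<beta>*r) = \<beta>*r-\<alpha>*r" using e2 by (simp add: algebra_simps)
      have l1: "lo s a 0 (w*r) \<le> hi s a 0 (w*r)" "lo s b (\<alpha>*r) (\<beta>*r) \<le> hi s b (\<alpha>*r) (\<beta>*r)"
        using e1 e2' w h by linarith+
      show ?thesis by (simp only: B_def box_meas[OF l1] e1 e2)
    qed
  qed
  have subB: "B w \<alpha> \<beta> \<subseteq> ball (a,b) r \<inter> cbox (0,0) (s,s)" if "0 \<le> w" "w \<le> 1" "0 \<le> \<alpha>" "\<alpha> \<le> \<beta>" "\<beta> \<le> 1" "w^2 + \<beta>^2 < 1" for w \<alpha> \<beta>
  proof
    fix v assume v: "v \<in> B w \<alpha> \<beta>"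
    obtain v1 v2 where vv: "v = (v1,v2)" by (cases v)
    have w: "0 \<le> w*r" "w*r \<le> s/2" proof -
      have "w*r \<le> r" using that r by (intro mult_left_le_one_le) auto
      then show "w*r \<le> s/2" using r by linarith
      show "0 \<le> w*r" using that r by simp
    qed
    have h: "0 \<le> \<alpha>*r" "\<alpha>*r \<le> \<beta>*r" "\<beta>*r \<le> s/2" proof -
      have "\<beta>*r \<le> r" using that r by (intro mult_left_le_one_le) auto
      then show "\<beta>*r \<le> s/2" using r by linarith
      show "0 \<le> \<alpha>*r" "\<alpha>*r \<le> \<beta>*r" using that r by (auto intro: mult_right_mono)
    qed
    note A = lohi[OF x(1,2) order.refl w(1) w(2)] and C = lohi[OF x(3,4) h]
    have v1: "lo s a 0 (w*r) < v1" "v1 < hi s a 0 (w*r)" and v2: "lo s b (\<alpha>*r) (\<beta>*r) < v2" "v2 < hi s b (\<alpha>*r) (\<beta>*r)"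
      using v by (auto simp: B_def vv)
    have d1: "\<bar>v1 - a\<bar> < w*r" using A(4)[OF v1] .
    have d2: "\<bar>v2 - b\<bar> < \<beta>*r" using C(4)[OF v2] .
    have "(v1-a)^2 \<le> (w*r)^2" proof -
      have "\<bar>v1-a\<bar>^2 \<le> (w*r)^2" by (rule power_mono) (use d1 in auto)
      then show ?thesis by simp
    qed
    moreover have "(v2-b)^2 \<le> (\<beta>*r)^2" proof -
      have "\<bar>v2-b\<bar>^2 \<le> (\<beta>*r)^2" by (rule power_mono) (use d2 in auto)
      then show ?thesis by simp
    qed
    ultimately have "(v1-a)^2 + (v2-b)^2 < r^2"
    proof -
      assume "(v1-a)^2 \<le> (w*r)^2" "(v2-b)^2 \<le> (\<beta>*r)^2"
      moreover have "(w*r)^2 + (\<beta>*r)^2 < r^2" using that r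
      proof -
        have "(w^2+\<beta>^2)*r^2 < 1*r^2" by (rule mult_strict_right_mono) (use that r in auto)
        then show ?thesis by (simp add: power_mult_distrib algebra_simps)
      qed
      ultimately show ?thesis by linarith
    qed
    then have "dist (a,b) v < r"
    proof -
      have "sqrt ((v1-a)^2 + (v2-b)^2) < sqrt (r^2)" by (rule real_sqrt_less_mono) fact
      then show ?thesis using r by (simp add: vv dist_Pair_Pair dist_real_def power2_commute)
    qed
    moreover have "v \<in> cbox (0,0) (s,s)" using v1 v2 A(2,3) C(2,3) by (auto simp: vv cbox_Pair_iff)
    ultimately show "v \<in> ball (a,b) r \<inter> cbox (0,0) (s,s)" by auto
  qed
  let ?B1 = "B 0.43 0.7 0.9" and ?B2 = "B 0.71 0.42 0.7" and ?B3 = "B 0.9 0 0.42"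
  have y1: "{lo s b (0.42*r) (0.7*r)<..<hi s b (0.42*r) (0.7*r)} \<inter> {lo s b (0.7*r) (0.9*r)<..<hi s b (0.7*r) (0.9*r)} = {}"
    by (rule lohi_disj) (use r in auto)
  have y2: "{lo s b (0*r) (0.42*r)<..<hi s b (0*r) (0.42*r)} \<inter> {lo s b (0.42*r) (0.7*r)<..<hi s b (0.42*r) (0.7*r)} = {}"
    by (rule lohi_disj) (use r in auto)
  have y3: "{lo s b (0*r) (0.42*r)<..<hi s b (0*r) (0.42*r)} \<inter> {lo s b (0.7*r) (0.9*r)<..<hi s b (0.7*r) (0.9*r)} = {}"
    by (rule lohi_disj) (use r in auto)
  have d1: "?B1 \<inter> ?B2 = {}" using y1 unfolding B_def by blast
  have d2: "(?B1 \<union> ?B2) \<inter> ?B3 = {}" using y2 y3 unfolding B_def by blast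
  have fm: "B w \<alpha> \<beta> \<in> fmeasurable lborel" for w \<alpha> \<beta> unfolding B_def by (rule box_fm)
  have fm12: "?B1 \<union> ?B2 \<in> fmeasurable lborel" by (rule fmeasurable.Un[OF fm fm])
  have "measure lborel (?B1 \<union> ?B2 \<union> ?B3) = measure lborel ?B1 + measure lborel ?B2 + measure lborel ?B3"
    using fm fm12 d1 d2 by (simp add: measure_Un_fm)
  also have "\<dots> = 0.6628 * r^2" by (simp add: mB power2_eq_square algebra_simps)
  finally have eq: "measure lborel (?B1 \<union> ?B2 \<union> ?B3) = 0.6628 * r^2" .
  have sub: "?B1 \<union> ?B2 \<union> ?B3 \<subseteq> ball (a,b) r \<inter> cbox (0,0) (s,s)"
    using subB[of "0.43" "0.7" "0.9"] subB[of "0.71" "0.42" "0.7"] subB[of "0.9" 0 "0.42"] by (auto simp: power2_eq_square)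
  have "cbox (0,0) (s,s) \<inter> ball (a,b) r \<in> fmeasurable lborel"
    by (rule fmeasurable_Int_fmeasurable) auto
  then have "ball (a,b) r \<inter> cbox (0,0) (s,s) \<in> fmeasurable lborel" by (simp add: Int_commute)
  from measure_mono_fmeasurable[OF sub fmeasurableD[OF fmeasurable.Un[OF fm12 fm]] this] eq show ?thesis
    by linarith
qed


lemma inner:
  fixes U :: "(real\<times>real) measure" and r :: real
  assumes U: "prob_space U" and sU[measurable_cong]: "sets U = sets borel"
  shows "(\<integral>\<^sup>+z. ennreal (if dist y z < r then 1/16 else 1) \<partial>U) = ennreal (1 - 15/16 * measure U (ball y r))"
proof -
  interpret prob_space U by (rule U)
  have sp: "space U = UNIV" using sets_eq_imp_space_eq[OF sU] by simp
  have int: "integrable U (\<lambda>z. 1 - 15/16 * indicator (ball y r) z :: real)"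
    by (rule integrable_const_bound[where B=1]) (auto simp: indicator_def)
  have "(\<integral>\<^sup>+z. ennreal (if dist y z < r then 1/16 else 1) \<partial>U) = (\<integral>\<^sup>+z. ennreal (1 - 15/16 * indicator (ball y r) z) \<partial>U)"
    by (rule nn_integral_cong) (auto simp: indicator_def)
  also have "\<dots> = ennreal (\<integral>z. (1 - 15/16 * indicator (ball y r) z) \<partial>U)"
    by (rule nn_integral_eq_integral[OF int]) (auto simp: indicator_def)
  also have "(\<integral>z. (1 - 15/16 * indicator (ball y r) z) \<partial>U) = 1 - 15/16 * measure U (ball y r)"
  proof -
    have i2: "integrable U (\<lambda>z. 15/16 * indicator (ball y r) z :: real)"
      by (rule integrable_const_bound[where B=1]) (auto simp: indicator_def)
    have "(\<integral>z. (1 - 15/16 * indicator (ball y r) z) \<partial>U) = (\<integral>z. 1 \<partial>U) - (\<integral>z. (15/16 * indicator (ball y r) z :: real) \<partial>U)"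
      by (rule Bochner_Integration.integral_diff[OF _ i2]) simp
    moreover have p1: "prob UNIV = 1" using prob_space unfolding sp .
    ultimately show ?thesis by (simp add: sp)
  qed
  finally show ?thesis .
qed

lemma ppsp: "prob_space U \<Longrightarrow> product_prob_space (\<lambda>_. U)"
  by (simp add: product_prob_space_def product_sigma_finite_def prob_space_imp_sigma_finite product_prob_space_axioms_def)

lemma prodbound:
  fixes U :: "(real\<times>real) measure" and r a :: real and S and i :: nat and J :: "nat set"
  assumes U: "prob_space U" and sU[measurable_cong]: "sets U = sets borel" and J: "finite J" "i \<notin> J"
    and AES: "AE y in U. y \<in> S" and pS: "\<forall>y\<in>S. 1 - 15/16 * measure U (ball y r) \<le> a" and a: "0 \<le> a"
  shows "(\<integral>\<^sup>+\<omega>. ennreal (\<Prod>j\<in>J. if dist (\<omega> i) (\<omega> j) < r then 1/16 else 1) \<partial>PiM (insert i J) (\<lambda>_. U)) \<le> ennreal (a ^ card J)"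
proof -
  interpret product_prob_space "\<lambda>_. U" using ppsp[OF U] .
  interpret U: prob_space U by (rule U)
  let ?g = "\<lambda>y z. (if dist y z < r then 1/16 else 1::real)"
  have "(\<integral>\<^sup>+\<omega>. ennreal (\<Prod>j\<in>J. ?g (\<omega> i) (\<omega> j)) \<partial>PiM (insert i J) (\<lambda>_. U))
      = (\<integral>\<^sup>+y. (\<integral>\<^sup>+x. ennreal (\<Prod>j\<in>J. ?g ((x(i:=y)) i) ((x(i:=y)) j)) \<partial>PiM J (\<lambda>_. U)) \<partial>U)"
    by (rule product_nn_integral_insert_rev) (use J in measurable)
  also have "\<dots> = (\<integral>\<^sup>+y. (\<Prod>j\<in>J. (\<integral>\<^sup>+z. ennreal (?g y z) \<partial>U)) \<partial>U)"
  proof (rule nn_integral_cong)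
    fix y
    have "(\<integral>\<^sup>+x. ennreal (\<Prod>j\<in>J. ?g ((x(i:=y)) i) ((x(i:=y)) j)) \<partial>PiM J (\<lambda>_. U))
        = (\<integral>\<^sup>+x. (\<Prod>j\<in>J. ennreal (?g y (x j))) \<partial>PiM J (\<lambda>_. U))"
    proof (rule nn_integral_cong)
      fix x
      have "(\<Prod>j\<in>J. ?g ((x(i:=y)) i) ((x(i:=y)) j)) = (\<Prod>j\<in>J. ?g y (x j))"
        using J by (intro prod.cong) auto
      then show "ennreal (\<Prod>j\<in>J. ?g ((x(i:=y)) i) ((x(i:=y)) j)) = (\<Prod>j\<in>J. ennreal (?g y (x j)))"
        by (simp add: prod_ennreal)
    qed
    also have "\<dots> = (\<Prod>j\<in>J. (\<integral>\<^sup>+z. ennreal (?g y z) \<partial>U))"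
      by (rule product_nn_integral_prod) (use J in auto)
    finally show "(\<integral>\<^sup>+x. ennreal (\<Prod>j\<in>J. ?g ((x(i:=y)) i) ((x(i:=y)) j)) \<partial>PiM J (\<lambda>_. U)) = (\<Prod>j\<in>J. (\<integral>\<^sup>+z. ennreal (?g y z) \<partial>U))" .
  qed
  also have "\<dots> \<le> (\<integral>\<^sup>+y. ennreal a ^ card J \<partial>U)"
  proof (rule nn_integral_mono_AE)
    show "AE y in U. (\<Prod>j\<in>J. (\<integral>\<^sup>+z. ennreal (?g y z) \<partial>U)) \<le> ennreal a ^ card J"
      using AES
    proof eventually_elim
      case (elim y)
      have "(\<Prod>j\<in>J. (\<integral>\<^sup>+z. ennreal (?g y z) \<partial>U)) \<le> (\<Prod>j\<in>J. ennreal a)"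
      proof (rule prod_mono_ennreal)
        fix j assume "j \<in> J"
        show "(\<integral>\<^sup>+z. ennreal (?g y z) \<partial>U) \<le> ennreal a"
          using inner[OF U sU, of y r] pS elim by (auto intro: ennreal_leI)
      qed
      then show ?case by simp
    qed
  qed
  also have "\<dots> = ennreal (a ^ card J)" using a prob_space.emeasure_space_1[OF U] by (simp add: ennreal_power)
  finally show ?thesis .
qed

lemma nodup:
  fixes U :: "(real\<times>real) measure" and I :: "nat set"
  assumes U: "prob_space U" and sU[measurable_cong]: "sets U = sets borel" and singl: "\<And>y. emeasure U {y} = 0"
    and I: "finite I" "i \<in> I" "j \<in> I" "i \<noteq> j"
  shows "AE \<omega> in PiM I (\<lambda>_. U). \<omega> i \<noteq> \<omega> j"
proof -
  interpret product_prob_space "\<lambda>_. U" using ppsp[OF U] .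
  define J where "J = I - {i}"
  have IJ: "I = insert i J" "finite J" "i \<notin> J" "j \<in> J" using I by (auto simp: J_def)
  define A where "A = {\<omega>\<in>space (PiM I (\<lambda>_. U)). dist (\<omega> i) (\<omega> j) \<le> 0}"
  have Ameas[measurable]: "A \<in> sets (PiM I (\<lambda>_. U))" unfolding A_def using I by measurable
  have "emeasure (PiM I (\<lambda>_. U)) A = (\<integral>\<^sup>+\<omega>. indicator A \<omega> \<partial>PiM I (\<lambda>_. U))"
    by (simp add: Ameas)
  also have "\<dots> = (\<integral>\<^sup>+y. (\<integral>\<^sup>+x. indicator A (x(i:=y)) \<partial>PiM J (\<lambda>_. U)) \<partial>U)"
    unfolding IJ(1) by (rule product_nn_integral_insert_rev) (use IJ Ameas[unfolded IJ(1)] in auto)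
  also have "\<dots> = (\<integral>\<^sup>+y. 0 \<partial>U)"
  proof (rule nn_integral_cong)
    fix y
    have "(\<integral>\<^sup>+x. indicator A (x(i:=y)) \<partial>PiM J (\<lambda>_. U)) = (\<integral>\<^sup>+x. indicator {y} (x j) \<partial>PiM J (\<lambda>_. U))"
    proof (rule nn_integral_cong)
      fix x assume x: "x \<in> space (PiM J (\<lambda>_. U))"
      have "x(i:=y) \<in> space (PiM I (\<lambda>_. U))"
        using x IJ by (auto simp: space_PiM PiE_def extensional_def sets_eq_imp_space_eq[OF sU])
      then show "indicator A (x(i:=y)) = (indicator {y} (x j) :: ennreal)"
        using IJ by (auto simp: A_def indicator_def)
    qed
    also have "\<dots> = (\<integral>\<^sup>+z. indicator {y} z \<partial>distr (PiM J (\<lambda>_. U)) U (\<lambda>\<omega>. \<omega> j))"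
      by (rule nn_integral_distr[symmetric]) (use IJ in auto)
    also have "\<dots> = (\<integral>\<^sup>+z. indicator {y} z \<partial>U)"
      using distr_PiM_component[of J "\<lambda>_. U" j] U IJ by simp
    also have "\<dots> = 0" using singl[of y] by simp
    finally show "(\<integral>\<^sup>+x. indicator A (x(i:=y)) \<partial>PiM J (\<lambda>_. U)) = 0" .
  qed
  finally have "A \<in> null_sets (PiM I (\<lambda>_. U))" using Ameas by auto
  then show ?thesis by (rule AE_I') (auto simp: A_def)
qed



lemma pointwise:
  fixes \<omega> :: "nat \<Rightarrow> real\<times>real" and I :: "nat set"
  assumes fin: "finite I" and inj: "inj_on \<omega> I" and le: "long_edge k r (\<omega> ` I)"
  shows "\<exists>i\<in>I. 1 \<le> 16^k * (\<Prod>j\<in>I-{i}. if dist (\<omega> i) (\<omega> j) < r then 1/16 else 1::real)"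
proof -
  let ?P = "\<omega> ` I"
  obtain x y where xy: "knn_adj k ?P x y" "r \<le> dist x y" using le unfolding long_edge_def by blast
  obtain a b where ab: "knn k ?P a b" "r \<le> dist a b"
    using xy unfolding knn_adj_def by (metis dist_commute)
  then have aP: "a \<in> ?P" and cardT: "card {z\<in>?P. z \<noteq> a \<and> dist a z < dist a b} < k"
    unfolding knn_def by auto
  then obtain i where i: "i \<in> I" "a = \<omega> i" by auto
  define C where "C = {j \<in> I-{i}. dist (\<omega> i) (\<omega> j) < r}"
  have sub: "\<omega> ` C \<subseteq> {z\<in>?P. z \<noteq> a \<and> dist a z < dist a b}"
  proof
    fix z assume "z \<in> \<omega> ` C"
    then obtain j where j: "j \<in> I" "j \<noteq> i" "dist (\<omega> i) (\<omega> j) < r" "z = \<omega> j" by (auto simp: C_def)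
    have "\<omega> j \<noteq> \<omega> i" using inj j i by (metis inj_on_def)
    then show "z \<in> {z\<in>?P. z \<noteq> a \<and> dist a z < dist a b}" using j i ab by auto
  qed
  have "card C = card (\<omega> ` C)"
    by (rule card_image[symmetric]) (rule inj_on_subset[OF inj], auto simp: C_def)
  also have "\<dots> \<le> card {z\<in>?P. z \<noteq> a \<and> dist a z < dist a b}"
    by (rule card_mono[OF _ sub]) (use fin in auto)
  finally have cC: "card C \<le> k" using cardT by linarith
  have "(\<Prod>j\<in>I-{i}. if dist (\<omega> i) (\<omega> j) < r then 1/16 else 1::real) = (1/16)^card C"
    using fin by (subst prod.If_cases) (auto simp: C_def Int_def)
  moreover have "1 \<le> 16^k * ((1::real)/16)^card C"
  proof -
    have "(16::real)^card C \<le> 16^k" using cC by (rule power_increasing) auto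
    then show ?thesis by (simp add: power_divide field_simps)
  qed
  ultimately show ?thesis using i(1) by (intro bexI[of _ i]) auto
qed



lemma nbound:
  fixes U :: "(real\<times>real) measure" and S and r p0 :: real and k N :: nat
  assumes U: "prob_space U" and sU[measurable_cong]: "sets U = sets borel" and singl: "\<And>y. emeasure U {y} = 0"
    and AES: "AE y in U. y \<in> S" and pS: "\<forall>y\<in>S. p0 \<le> measure U (ball y r)" and p0: "p0 \<le> 1"
  shows "measure (PiM {..<N} (\<lambda>_. U)) {\<omega> \<in> space (PiM {..<N} (\<lambda>_. U)). long_edge k r (\<omega> ` {..<N})}
           \<le> real N * 16^k * (1 - 15/16*p0)^(N-1)"
proof -
  interpret product_prob_space "\<lambda>_. U" using ppsp[OF U] .
  define I where "I = {..<N}"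
  define P where "P = PiM I (\<lambda>_. U)"
  define E where "E = {\<omega> \<in> space P. long_edge k r (\<omega> ` I)}"
  define a where "a = 1 - 15/16*p0"
  have a: "0 \<le> a" using p0 by (simp add: a_def)
  have pS': "\<forall>y\<in>S. 1 - 15/16 * measure U (ball y r) \<le> a" using pS by (auto simp: a_def)
  have finI: "finite I" by (simp add: I_def)
  interpret Q: prob_space P unfolding P_def by (rule prob_space_PiM) (rule U)
  have rhs: "0 \<le> real N * 16^k * a^(N-1)" using a by simp
  show ?thesis
  proof (cases "E \<in> sets P")
    case False
    then show ?thesis using rhs by (simp add: measure_notin_sets E_def P_def I_def a_def)
  next
    case True
    let ?g = "\<lambda>y z. (if dist y z < r then 1/16 else 1::real)"
    have AEinj: "AE \<omega> in P. inj_on \<omega> I"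
    proof -
      have "AE \<omega> in P. \<forall>i\<in>I. \<forall>j\<in>I. i \<noteq> j \<longrightarrow> \<omega> i \<noteq> \<omega> j"
        unfolding P_def
      proof (intro AE_finite_allI finI)
        fix i j assume "i \<in> I" "j \<in> I"
        then show "AE \<omega> in PiM I (\<lambda>_. U). i \<noteq> j \<longrightarrow> \<omega> i \<noteq> \<omega> j"
          using nodup[OF U sU singl finI, of i j] by (cases "i = j") auto
      qed
      then show ?thesis by eventually_elim (auto simp: inj_on_def)
    qed
    have meas: "(\<lambda>\<omega>. ennreal (16^k * (\<Prod>j\<in>I-{i}. ?g (\<omega> i) (\<omega> j)))) \<in> borel_measurable P" if "i \<in> I" for i
      unfolding P_def using that by measurable
    have "emeasure P E = (\<integral>\<^sup>+\<omega>. indicator E \<omega> \<partial>P)" using True by simp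
    also have "\<dots> \<le> (\<integral>\<^sup>+\<omega>. (\<Sum>i\<in>I. ennreal (16^k * (\<Prod>j\<in>I-{i}. ?g (\<omega> i) (\<omega> j)))) \<partial>P)"
    proof (rule nn_integral_mono_AE)
      show "AE \<omega> in P. indicator E \<omega> \<le> (\<Sum>i\<in>I. ennreal (16^k * (\<Prod>j\<in>I-{i}. ?g (\<omega> i) (\<omega> j))))"
        using AEinj
      proof eventually_elim
        case (elim \<omega>)
        show ?case
        proof (cases "\<omega> \<in> E")
          case False then show ?thesis by simp
        next
          case True
          then have "long_edge k r (\<omega> ` I)" by (simp add: E_def)
          from pointwise[OF finI elim this] obtain i where i: "i \<in> I"
            and le1: "1 \<le> 16^k * (\<Prod>j\<in>I-{i}. ?g (\<omega> i) (\<omega> j))" by blast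
          have "indicator E \<omega> = (1::ennreal)" using True by simp
          also have "\<dots> \<le> ennreal (16^k * (\<Prod>j\<in>I-{i}. ?g (\<omega> i) (\<omega> j)))"
            using le1 by (simp add: ennreal_leI[of 1, simplified])
          also have "\<dots> \<le> (\<Sum>i\<in>I. ennreal (16^k * (\<Prod>j\<in>I-{i}. ?g (\<omega> i) (\<omega> j))))"
            by (rule member_le_sum[OF i]) (auto simp: finI)
          finally show ?thesis .
        qed
      qed
    qed
    also have "\<dots> = (\<Sum>i\<in>I. (\<integral>\<^sup>+\<omega>. ennreal (16^k * (\<Prod>j\<in>I-{i}. ?g (\<omega> i) (\<omega> j))) \<partial>P))"
      by (rule nn_integral_sum) (rule meas)
    also have "\<dots> \<le> (\<Sum>i\<in>I. ennreal (16^k * a^(N-1)))"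
    proof (rule sum_mono)
      fix i assume i: "i \<in> I"
      have II: "I = insert i (I - {i})" using i by auto
      have cI: "card (I - {i}) = N - 1" using i by (simp add: I_def)
      have "(\<integral>\<^sup>+\<omega>. ennreal (16^k * (\<Prod>j\<in>I-{i}. ?g (\<omega> i) (\<omega> j))) \<partial>P)
          = ennreal (16^k) * (\<integral>\<^sup>+\<omega>. ennreal (\<Prod>j\<in>I-{i}. ?g (\<omega> i) (\<omega> j)) \<partial>P)"
      proof -
        have "(\<integral>\<^sup>+\<omega>. ennreal (16^k * (\<Prod>j\<in>I-{i}. ?g (\<omega> i) (\<omega> j))) \<partial>P)
          = (\<integral>\<^sup>+\<omega>. ennreal (16^k) * ennreal (\<Prod>j\<in>I-{i}. ?g (\<omega> i) (\<omega> j)) \<partial>P)"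
          by (rule nn_integral_cong) (simp add: ennreal_mult prod_nonneg)
        also have "\<dots> = ennreal (16^k) * (\<integral>\<^sup>+\<omega>. ennreal (\<Prod>j\<in>I-{i}. ?g (\<omega> i) (\<omega> j)) \<partial>P)"
          by (rule nn_integral_cmult) (use i in \<open>unfold P_def, measurable\<close>)
        finally show ?thesis .
      qed
      moreover have b: "(\<integral>\<^sup>+\<omega>. ennreal (\<Prod>j\<in>I-{i}. ?g (\<omega> i) (\<omega> j)) \<partial>P) \<le> ennreal (a ^ card (I - {i}))"
        unfolding P_def by (subst II, rule prodbound[OF U sU _ _ AES pS' a]) (use finI in auto)
      ultimately show "(\<integral>\<^sup>+\<omega>. ennreal (16^k * (\<Prod>j\<in>I-{i}. ?g (\<omega> i) (\<omega> j))) \<partial>P) \<le> ennreal (16^k * a^(N-1))"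
        using cI a mult_left_mono[OF b, of "ennreal (16^k)"] by (simp add: ennreal_mult)
    qed
    also have "\<dots> = ennreal (real N * 16^k * a^(N-1))"
      using a by (simp add: I_def ennreal_of_nat_eq_real_of_nat ennreal_mult[symmetric])
    finally have "ennreal (measure P E) \<le> ennreal (real N * 16^k * a^(N-1))"
      by (simp add: Q.emeasure_eq_measure)
    then have "measure P E \<le> real N * 16^k * a^(N-1)" using rhs by simp
    then show ?thesis by (simp add: P_def E_def I_def a_def)
  qed
qed



lemma pseries:
  fixes m a C :: real
  shows "(\<lambda>N. (m^N / fact N * exp(-m)) * (real N * C * a^(N-1))) sums (m * C * exp(-m*(1-a)))"
proof -
  let ?f = "\<lambda>N. (m^N / fact N * exp(-m)) * (real N * C * a^(N-1))"
  have "(\<lambda>n. (m*a)^n / fact n) sums exp (m*a)"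
    using exp_converges[of "m*a"] by (simp add: divide_inverse mult.commute)
  then have "(\<lambda>n. (m*C*exp(-m)) * ((m*a)^n / fact n)) sums ((m*C*exp(-m)) * exp (m*a))"
    by (rule sums_mult)
  moreover have "(\<lambda>n. (m*C*exp(-m)) * ((m*a)^n / fact n)) = (\<lambda>n. ?f (Suc n))"
  proof (rule ext)
    fix n
    have fs: "(fact (Suc n)::real) = (1 + real n) * fact n" by simp
    have p: "(fact n::real) > 0" "1 + real n > 0" by auto
    have c0: "q \<noteq> 0 \<Longrightarrow> F \<noteq> 0 \<Longrightarrow> x / (q * F) * (q * Y) = x / F * Y" for x Y q F :: real
      by (simp add: field_simps)
    have c: "x / ((1 + real n) * fact n) * ((1 + real n) * Y) = x / fact n * Y" for x Y :: real
      by (rule c0) (use p in auto)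
    have "?f (Suc n) = (m^Suc n / ((1 + real n) * fact n)) * ((1 + real n) * (exp(-m) * C * a^n))"
      by (simp only: fs of_nat_Suc diff_Suc_1 add.commute[of "real n" 1] mult_ac)
    also have "\<dots> = m^Suc n / fact n * (exp(-m) * C * a^n)" by (rule c)
    finally show "(m*C*exp(-m)) * ((m*a)^n / fact n) = ?f (Suc n)"
      by (simp add: power_mult_distrib algebra_simps)
  qed
  moreover have "(m*C*exp(-m)) * exp (m*a) = m * C * exp(-m*(1-a))"
    by (simp add: mult.assoc exp_add[symmetric] algebra_simps)
  ultimately have "(\<lambda>n. ?f (Suc n)) sums (m * C * exp(-m*(1-a)))" by simp
  then show ?thesis by (subst (asm) sums_Suc_iff) simp
qed

lemma exp_big: "16 < exp (3.2::real)"
proof -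
  have "1.2 \<le> exp (0.2::real)" using exp_ge_add_one_self[of "0.2::real"] by simp
  then have A: "1.2^16 \<le> exp (0.2::real) ^ 16" by (rule power_mono) simp
  have B: "exp (0.2::real) ^ 16 = exp (3.2)" by (subst exp_of_nat_mult[symmetric]) simp
  have C: "(16::real) < 1.2^16" by (simp add: power_divide)
  from A B C show ?thesis by linarith
qed



lemma final_ineq:
  fixes m L :: real and k :: nat
  assumes m: "0 < m" "m \<le> exp (10/3 * real k)" and L: "15.534375 * real k \<le> L"
  shows "m * 16^k * exp (-L) \<le> (16 * exp (-3.2))^k * exp (- 9 * real k)"
proof -
  have "m * 16^k * exp (-L) \<le> exp (10/3 * real k) * 16^k * exp (-(15.534375 * real k))"
    using m L by (intro mult_mono) auto
  also have "\<dots> = 16^k * exp (10/3 * real k + -(15.534375 * real k))"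
    by (simp only: exp_add mult_ac)
  also have "\<dots> \<le> 16^k * exp (-3.2 * real k + - 9 * real k)"
    by (intro mult_left_mono) auto
  also have "\<dots> = (16 * exp (-3.2))^k * exp (- 9 * real k)"
  proof -
    have "(16 * exp (-3.2::real))^k = 16^k * exp (real k * -3.2)"
      by (simp only: power_mult_distrib exp_of_nat_mult)
    moreover have "exp (-3.2 * real k + - 9 * real k) = exp (real k * -3.2) * exp (- 9 * real k)"
      by (subst exp_add[symmetric]) (simp add: algebra_simps)
    ultimately show ?thesis by simp
  qed
  finally show ?thesis .
qed



theorem corollary6:
  fixes M :: real
  assumes "M \<ge> 40"
    and "\<forall>\<epsilon>>0. \<exists>K. \<forall>k::nat. k \<ge> K \<longrightarrow> (\<forall>n::real.
           0.30 * ln n < real k \<and> real k < 0.52 * ln n \<longrightarrow>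
           poisson_prob n (two_big_components k (M * sqrt (real k) / 8)) \<le> \<epsilon> * exp (- 9 * real k))"
  shows "\<forall>\<epsilon>>0. \<exists>K. \<forall>k::nat. k \<ge> K \<longrightarrow> (\<forall>m n::real.
           M\<^sup>2 * real k \<le> m \<and> m \<le> n \<and> 0.3 * ln n \<le> real k \<longrightarrow>
           poisson_prob m (long_edge k (M * sqrt (real k) / 8)) \<le> \<epsilon> * exp (- 9 * real k))"
proof (intro allI impI)
  fix \<epsilon> :: real assume \<epsilon>: "\<epsilon> > 0"
  have M: "40 \<le> M" using assms(1) .
  define \<rho> where "\<rho> = 16 * exp (-3.2::real)"
  have \<rho>0: "0 \<le> \<rho>" by (simp add: \<rho>_def)
  have \<rho>1: "\<rho> < 1" using exp_big by (simp add: \<rho>_def exp_minus field_simps)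
  have "(\<lambda>k. \<rho>^k) \<longlonglongrightarrow> 0" by (rule LIMSEQ_power_zero) (use \<rho>0 \<rho>1 in simp)
  from order_tendstoD(2)[OF this \<epsilon>] obtain K0 where K0: "\<And>k. k \<ge> K0 \<Longrightarrow> \<rho>^k < \<epsilon>"
    unfolding eventually_sequentially by blast
  show "\<exists>K. \<forall>k::nat. k \<ge> K \<longrightarrow> (\<forall>m n::real.
           M\<^sup>2 * real k \<le> m \<and> m \<le> n \<and> 0.3 * ln n \<le> real k \<longrightarrow>
           poisson_prob m (long_edge k (M * sqrt (real k) / 8)) \<le> \<epsilon> * exp (- 9 * real k))"
  proof (intro exI[of _ "max K0 1"] allI impI)
    fix k :: nat and m n :: real
    assume k: "max K0 1 \<le> k" and H: "M\<^sup>2 * real k \<le> m \<and> m \<le> n \<and> 0.3 * ln n \<le> real k"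
    have k1: "1 \<le> k" and kK: "K0 \<le> k" using k by auto
    have M2: "1600 \<le> M\<^sup>2"
    proof -
      have "40*40 \<le> M*M" by (rule mult_mono) (use M in auto)
      then show ?thesis by (simp add: power2_eq_square)
    qed
    have mpos: "0 < m"
    proof -
      have "1600 * 1 \<le> M\<^sup>2 * real k" using M2 k1 by (intro mult_mono) auto
      then show ?thesis using H by linarith
    qed
    have npos: "0 < n" using H mpos by linarith
    have "ln n \<le> 10/3 * real k" using H by linarith
    then have "n \<le> exp (10/3 * real k)" using npos by (metis exp_le_cancel_iff exp_ln)
    then have mexp: "m \<le> exp (10/3 * real k)" using H by linarith
    define r where "r = M * sqrt (real k) / 8"
    define s where "s = sqrt m"
    have rpos: "0 < r" using M k1 by (simp add: r_def)
    have r8: "8 * r \<le> s"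
    proof -
      have "sqrt (M\<^sup>2 * real k) \<le> sqrt m" using H by (simp add: real_sqrt_le_mono)
      moreover have "sqrt (M\<^sup>2 * real k) = M * sqrt (real k)" using M by (simp add: real_sqrt_mult)
      ultimately show ?thesis by (simp add: r_def s_def)
    qed
    have r2: "r^2 = M\<^sup>2 * real k / 64" by (simp add: r_def power_mult_distrib power_divide)
    define S where "S = square m"
    have S_eq: "S = cbox (0,0) (s,s)" by (simp add: S_def square_def s_def)
    have s0: "0 \<le> s" using mpos by (simp add: s_def)
    have ss: "s * s = m" using mpos by (simp add: s_def)
    have emS: "emeasure lborel S = ennreal m"
      unfolding S_eq using s0 ss by (simp add: emeasure_lborel_cbox_eq Basis_prod_def)
    have mS: "measure lborel S = m" using emS mpos by (simp add: measure_def)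
    define U where "U = uniform_measure lborel S"
    have Ssets: "S \<in> sets lborel" by (simp add: S_eq)
    have U: "prob_space U" unfolding U_def by (rule prob_space_uniform_measure) (use emS mpos in auto)
    have sU: "sets U = sets borel" by (simp add: U_def)
    have singl: "emeasure U {y} = 0" for y
    proof -
      have "emeasure U {y} = emeasure lborel (S \<inter> {y}) / emeasure lborel S"
        unfolding U_def by (rule emeasure_uniform_measure) (auto simp: S_eq)
      moreover have "emeasure lborel (S \<inter> {y}) = 0" by (cases "y \<in> S") auto
      ultimately show ?thesis by simp
    qed
    have AES: "AE y in U. y \<in> S" unfolding U_def by (rule AE_uniform_measureI) (auto simp: S_eq)
    define p0 where "p0 = 0.6628 * r^2 / m"
    have pS: "\<forall>y\<in>S. p0 \<le> measure U (ball y r)"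
    proof
      fix y assume y: "y \<in> S"
      obtain a b where ab: "y = (a,b)" by (cases y)
      have "0 \<le> a" "a \<le> s" "0 \<le> b" "b \<le> s" using y by (auto simp: S_eq ab cbox_Pair_iff)
      from geo[OF rpos r8 this] have g: "0.6628 * r^2 \<le> measure lborel (ball y r \<inter> S)"
        by (simp add: ab S_eq)
      have "measure U (ball y r) = measure lborel (S \<inter> ball y r) / measure lborel S"
        unfolding U_def by (rule measure_uniform_measure) (use emS mpos in auto)
      moreover have "0.6628 * r^2 / m \<le> measure lborel (S \<inter> ball y r) / m"
        by (rule divide_right_mono) (use g mpos in \<open>auto simp: Int_commute\<close>)
      ultimately show "p0 \<le> measure U (ball y r)" using mS by (simp add: p0_def)
    qed
    have p01: "p0 \<le> 1"
    proof -
      have "(0,0) \<in> S" using s0 by (simp add: S_eq cbox_Pair_iff)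
      then have "p0 \<le> measure U (ball (0,0) r)" using pS by auto
      also have "\<dots> \<le> 1" using prob_space.prob_le_1[OF U] .
      finally show ?thesis .
    qed
    define a where "a = 1 - 15/16*p0"
    define w where "w N = m^N / fact N * exp(-m)" for N :: nat
    define T where "T = (\<lambda>N. w N * measure (PiM {..<N} (\<lambda>_. U)) {\<omega> \<in> space (PiM {..<N} (\<lambda>_. U)). long_edge k r (\<omega> ` {..<N})})"
    define B where "B = (\<lambda>N. w N * (real N * 16^k * a^(N-1)))"
    have w0: "0 \<le> w N" for N using mpos by (simp add: w_def)
    have TB: "0 \<le> T N \<and> T N \<le> B N" for N
      unfolding T_def B_def a_def using w0[of N] nbound[OF U sU singl AES pS p01, of N k]
      by (auto intro: mult_left_mono)
    have Bsum: "B sums (m * 16^k * exp(-m*(1-a)))"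
      using pseries[of m "16^k" a] unfolding B_def w_def .
    have Tsum: "summable T"
      by (rule summable_comparison_test[OF _ sums_summable[OF Bsum]]) (use TB in auto)
    have "poisson_prob m (long_edge k (M * sqrt (real k) / 8)) = suminf T"
      unfolding poisson_prob_def T_def w_def U_def S_def r_def by (rule refl)
    also have "\<dots> \<le> suminf B" by (rule suminf_le) (use TB Tsum sums_summable[OF Bsum] in auto)
    also have "\<dots> = m * 16^k * exp(-(m*(1-a)))" using Bsum by (simp add: sums_iff)
    also have "\<dots> \<le> \<rho>^k * exp (- 9 * real k)" unfolding \<rho>_def
    proof (rule final_ineq[OF mpos mexp])
      have "m * (1 - a) = 15/16 * 0.6628 * r^2" using mpos by (simp add: a_def p0_def)
      also have "\<dots> = 15/16 * 0.6628 * M\<^sup>2 * real k / 64" by (simp add: r2)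
      finally have e: "m * (1 - a) = 15/16 * 0.6628 * M\<^sup>2 * real k / 64" .
      have "15/16 * 0.6628 * 1600 * real k / 64 \<le> 15/16 * 0.6628 * M\<^sup>2 * real k / 64"
        using M2 by (intro divide_right_mono mult_right_mono mult_left_mono) auto
      then show "15.534375 * real k \<le> m * (1 - a)" unfolding e by simp
    qed
    also have "\<dots> \<le> \<epsilon> * exp (- 9 * real k)"
      using K0[OF kK] by (intro mult_right_mono) auto
    finally show "poisson_prob m (long_edge k (M * sqrt (real k) / 8)) \<le> \<epsilon> * exp (- 9 * real k)" .
  qed
qed


end
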